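(* Every strict gammoid has weak canonical bases over closed sets. That is, if $\mathcal A=(A,\mathrm{cl})$ is a matroid with a presentation $(A;R)\in\mathcal C$, $B$ is a closed set of $\mathcal A$ and $\bar a$ is a finite tuple of elements of $A$, then there is a closed set $B_0\subseteq B$ such that for every closed set $B_1\subseteq B$: $d(\bar a/B_1)=d(\bar a/B)$ if and only if $B_0\subseteq B_1$.
   Context: A set system is a pair $(A;R)$ where $R$ is a set of finite non-empty subsets of $A$; for $X\subseteq A$, $R[X]=\{r\in R:r\subseteq X\}$ and $\delta(X)=|X|-|R[X]|$. $\mathcal C$ is the class of finite set systems with $\delta(X)\ge0$ for all $X\subseteq A$. For $(A;R)\in\mathcal C$, $d(X)=\min\{\delta(Y):X\subseteq Y\subseteq A\}$, $\mathrm{cl}(X)=\{y:d(X\cup\{y\})=d(X)\}$, and $PG(A;R)$ is the matroid $(A,\mathrm{cl})$ with rank function $d$; $(A;R)$ is a presentation of $\mathcal A$ if $PG(A;R)=\mathcal A$. Strict gammoids are exactly the matroids having such a presentation. A closed set is $F$ with $\mathrm{cl}(F)=F$. For a closed set $B$ and a finite tuple $\bar a$, $d(\bar a/B)=d(\bar aB)-d(B)$, where $\bar aB$ is the union of $B$ with the set of entries of $\bar a$. *)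

theory Defs
  imports Main
begin

definition set_system :: "'a set \<Rightarrow> 'a set set \<Rightarrow> bool" where
  "set_system A R \<longleftrightarrow> (\<forall>r\<in>R. finite r \<and> r \<noteq> {} \<and> r \<subseteq> A)"

definition Rsub :: "'a set set \<Rightarrow> 'a set \<Rightarrow> 'a set set" where
  "Rsub R X = {r \<in> R. r \<subseteq> X}"

definition delta :: "'a set set \<Rightarrow> 'a set \<Rightarrow> int" where
  "delta R X = int (card X) - int (card (Rsub R X))"

definition in_C :: "'a set \<Rightarrow> 'a set set \<Rightarrow> bool" where
  "in_C A R \<longleftrightarrow> finite A \<and> set_system A R \<and> (\<forall>X. X \<subseteq> A \<longrightarrow> delta R X \<ge> 0)"

definition dd :: "'a set \<Rightarrow> 'a set set \<Rightarrow> 'a set \<Rightarrow> int" where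
  "dd A R X = Min {delta R Y | Y. X \<subseteq> Y \<and> Y \<subseteq> A}"

definition cl :: "'a set \<Rightarrow> 'a set set \<Rightarrow> 'a set \<Rightarrow> 'a set" where
  "cl A R X = {y \<in> A. dd A R (X \<union> {y}) = dd A R X}"

definition closed_set :: "'a set \<Rightarrow> 'a set set \<Rightarrow> 'a set \<Rightarrow> bool" where
  "closed_set A R F \<longleftrightarrow> F \<subseteq> A \<and> cl A R F = F"

definition dd_rel :: "'a set \<Rightarrow> 'a set set \<Rightarrow> 'a list \<Rightarrow> 'a set \<Rightarrow> int" where
  "dd_rel A R as B = dd A R (set as \<union> B) - dd A R B"

end

theory Submission
  imports Defs
begin

definition crs :: "'a set set \<Rightarrow> 'a set \<Rightarrow> 'a set \<Rightarrow> nat" where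
  "crs R Y Z = card (Rsub R (Y \<union> Z) - (Rsub R Y \<union> Rsub R Z))"

lemma inC_finA: "in_C A R \<Longrightarrow> finite A" by (simp add: in_C_def)

lemma inC_finR: assumes "in_C A R" shows "finite R"
proof -
  have "R \<subseteq> Pow A" using assms by (auto simp: in_C_def set_system_def)
  thus ?thesis using assms by (meson finite_Pow_iff finite_subset in_C_def)
qed

lemma delta_exact:
  assumes C: "in_C A R" and Y: "Y \<subseteq> A" and Z: "Z \<subseteq> A"
  shows "delta R Y + delta R Z = delta R (Y \<union> Z) + delta R (Y \<inter> Z) + int (crs R Y Z)"
proof -
  have fA: "finite A" using C by (simp add: in_C_def)
  have fR: "finite R" using inC_finR[OF C] .
  have fY: "finite Y" "finite Z" using Y Z fA finite_subset by auto
  have c1: "card (Y \<union> Z) + card (Y \<inter> Z) = card Y + card Z"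
    using card_Un_Int fY by metis
  have fs: "finite (Rsub R W)" for W using fR by (simp add: Rsub_def)
  have i: "Rsub R (Y \<inter> Z) = Rsub R Y \<inter> Rsub R Z" by (auto simp: Rsub_def)
  have c2: "card (Rsub R Y \<union> Rsub R Z) + card (Rsub R Y \<inter> Rsub R Z) = card (Rsub R Y) + card (Rsub R Z)"
    using card_Un_Int fs by metis
  have sub: "Rsub R Y \<union> Rsub R Z \<subseteq> Rsub R (Y \<union> Z)" by (auto simp: Rsub_def)
  have c3: "card (Rsub R (Y \<union> Z)) = crs R Y Z + card (Rsub R Y \<union> Rsub R Z)"
    unfolding crs_def using card_Diff_subset[OF _ sub] fs card_mono[OF _ sub]
    by (metis (no_types, lifting) le_add_diff_inverse2 finite_Un)
  have d1: "int (card (Y \<union> Z)) + int (card (Y \<inter> Z)) = int (card Y) + int (card Z)"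
    using c1 by (metis of_nat_add)
  have d2: "int (card (Rsub R Y \<union> Rsub R Z)) + int (card (Rsub R Y \<inter> Rsub R Z)) = int (card (Rsub R Y)) + int (card (Rsub R Z))"
    using c2 by (metis of_nat_add)
  have d3: "int (card (Rsub R (Y \<union> Z))) = int (crs R Y Z) + int (card (Rsub R Y \<union> Rsub R Z))"
    using c3 by (metis of_nat_add)
  show ?thesis unfolding delta_def i using d1 d2 d3 by linarith
qed

lemma delta_submod:
  assumes C: "in_C A R" and Y: "Y \<subseteq> A" and Z: "Z \<subseteq> A"
  shows "delta R (Y \<union> Z) + delta R (Y \<inter> Z) \<le> delta R Y + delta R Z"
  using delta_exact[OF assms] by linarith

lemma dd_set_fin: "finite A \<Longrightarrow> finite {delta R Y | Y. X \<subseteq> Y \<and> Y \<subseteq> A}"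
proof -
  assume "finite A"
  moreover have "{delta R Y | Y. X \<subseteq> Y \<and> Y \<subseteq> A} \<subseteq> delta R ` Pow A" by auto
  ultimately show ?thesis by (meson finite_Pow_iff finite_imageI finite_subset)
qed

lemma dd_le: assumes "in_C A R" "X \<subseteq> Y" "Y \<subseteq> A" shows "dd A R X \<le> delta R Y"
proof -
  have f: "finite A" using inC_finA[OF assms(1)] .
  have m: "delta R Y \<in> {delta R Y | Y. X \<subseteq> Y \<and> Y \<subseteq> A}" using assms by blast
  show ?thesis unfolding dd_def by (rule Min_le[OF dd_set_fin[OF f] m])
qed

lemma dd_ex: assumes "in_C A R" "X \<subseteq> A"
  shows "\<exists>Y. X \<subseteq> Y \<and> Y \<subseteq> A \<and> dd A R X = delta R Y"
proof -
  have f: "finite A" using inC_finA[OF assms(1)] .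
  have ne: "{delta R Y | Y. X \<subseteq> Y \<and> Y \<subseteq> A} \<noteq> {}" using assms(2) by blast
  have "dd A R X \<in> {delta R Y | Y. X \<subseteq> Y \<and> Y \<subseteq> A}"
    unfolding dd_def by (rule Min_in[OF dd_set_fin[OF f] ne])
  thus ?thesis by blast
qed

lemma dd_mono: assumes "in_C A R" "X \<subseteq> X'" "X' \<subseteq> A" shows "dd A R X \<le> dd A R X'"
proof -
  obtain Y where Y: "X' \<subseteq> Y" "Y \<subseteq> A" "dd A R X' = delta R Y" using dd_ex[OF assms(1,3)] by blast
  have "X \<subseteq> Y" using Y(1) assms(2) by blast
  thus ?thesis using dd_le[OF assms(1) _ Y(2)] Y(3) by simp
qed

lemma dd_submod: assumes C: "in_C A R" "Y \<subseteq> A" "Z \<subseteq> A"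
  shows "dd A R (Y \<union> Z) + dd A R (Y \<inter> Z) \<le> dd A R Y + dd A R Z"
proof -
  obtain MY where MY: "Y \<subseteq> MY" "MY \<subseteq> A" "dd A R Y = delta R MY" using dd_ex[OF C(1,2)] by blast
  obtain MZ where MZ: "Z \<subseteq> MZ" "MZ \<subseteq> A" "dd A R Z = delta R MZ" using dd_ex[OF C(1,3)] by blast
  have u: "Y \<union> Z \<subseteq> MY \<union> MZ" "MY \<union> MZ \<subseteq> A" using MY MZ by blast+
  have i: "Y \<inter> Z \<subseteq> MY \<inter> MZ" "MY \<inter> MZ \<subseteq> A" using MY MZ by blast+
  show ?thesis
    using delta_submod[OF C(1) MY(2) MZ(2)] dd_le[OF C(1) u] dd_le[OF C(1) i] MY(3) MZ(3) by linarith
qed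

lemma cl_max: assumes "in_C A R" "X \<subseteq> Y" "Y \<subseteq> A" "delta R Y = dd A R X"
  shows "Y \<subseteq> cl A R X"
proof
  fix y assume y: "y \<in> Y"
  have "dd A R (X \<union> {y}) \<le> delta R Y" using dd_le[OF assms(1), of "X \<union> {y}" Y] assms y by auto
  moreover have "dd A R X \<le> dd A R (X \<union> {y})" using dd_mono[OF assms(1), of X "X \<union> {y}"] assms y by auto
  ultimately show "y \<in> cl A R X" using assms y unfolding cl_def by auto
qed

lemma closed_delta: assumes "in_C A R" "closed_set A R B" shows "delta R B = dd A R B"
proof -
  have BA: "B \<subseteq> A" using assms by (simp add: closed_set_def)
  obtain Y where Y: "B \<subseteq> Y" "Y \<subseteq> A" "dd A R B = delta R Y" using dd_ex[OF assms(1) BA] by blast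
  have "Y \<subseteq> B" using cl_max[OF assms(1) Y(1,2)] Y(3) assms(2) by (simp add: closed_set_def)
  thus ?thesis using Y by auto
qed

lemma cl_ext: "X \<subseteq> A \<Longrightarrow> X \<subseteq> cl A R X"
  unfolding cl_def by (auto simp: insert_absorb)

lemma closed_Int: assumes C: "in_C A R" and F1: "closed_set A R F1" and F2: "closed_set A R F2"
  shows "closed_set A R (F1 \<inter> F2)"
proof -
  have A1: "F1 \<subseteq> A" and A2: "F2 \<subseteq> A" using F1 F2 by (auto simp: closed_set_def)
  have key: "y \<in> G" if G: "closed_set A R G" "G \<subseteq> A" "F1 \<inter> F2 \<subseteq> G" and y: "y \<in> cl A R (F1 \<inter> F2)" for G y
  proof -
    have yA: "y \<in> A" and e: "dd A R ((F1 \<inter> F2) \<union> {y}) = dd A R (F1 \<inter> F2)"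
      using y by (auto simp: cl_def)
    have ZA: "(F1 \<inter> F2) \<union> {y} \<subseteq> A" using A1 yA by blast
    have s: "dd A R (G \<union> ((F1 \<inter> F2) \<union> {y})) + dd A R (G \<inter> ((F1 \<inter> F2) \<union> {y})) \<le> dd A R G + dd A R ((F1 \<inter> F2) \<union> {y})"
      using dd_submod[OF C G(2) ZA] .
    have s1: "F1 \<inter> F2 \<subseteq> G \<inter> ((F1 \<inter> F2) \<union> {y})" using G(3) by blast
    have s2: "G \<inter> ((F1 \<inter> F2) \<union> {y}) \<subseteq> A" using G(2) by blast
    have m: "dd A R (F1 \<inter> F2) \<le> dd A R (G \<inter> ((F1 \<inter> F2) \<union> {y}))"
      using dd_mono[OF C s1 s2] .
    have u: "G \<union> ((F1 \<inter> F2) \<union> {y}) = G \<union> {y}" using G(3) by blast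
    have s3: "G \<subseteq> G \<union> {y}" by blast
    have s4: "G \<union> {y} \<subseteq> A" using G(2) yA by blast
    have m2: "dd A R G \<le> dd A R (G \<union> {y})" using dd_mono[OF C s3 s4] .
    have "dd A R (G \<union> {y}) = dd A R G" using s[unfolded u] m m2 e by linarith
    hence "y \<in> cl A R G" using yA by (simp add: cl_def)
    thus ?thesis using G(1) by (simp add: closed_set_def)
  qed
  have "cl A R (F1 \<inter> F2) \<subseteq> F1 \<inter> F2"
  proof
    fix y assume "y \<in> cl A R (F1 \<inter> F2)"
    thus "y \<in> F1 \<inter> F2" using key[OF F1 A1 Int_lower1] key[OF F2 A2 Int_lower2] by blast
  qed
  moreover have "F1 \<inter> F2 \<subseteq> cl A R (F1 \<inter> F2)" using cl_ext[of "F1 \<inter> F2" A R] A1 by blast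
  moreover have "F1 \<inter> F2 \<subseteq> A" using A1 by blast
  ultimately show ?thesis unfolding closed_set_def by blast
qed

lemma L1:
  assumes C: "in_C A R" and B: "closed_set A R B" and Y: "Y \<subseteq> B" and X: "X \<subseteq> A"
    and C1: "X \<union> Y \<subseteq> C1" "C1 \<subseteq> A" "delta R C1 = dd A R (X \<union> Y)"
  shows "dd A R (X \<union> B) + dd A R Y \<le> dd A R (X \<union> Y) + dd A R B"
    and "dd A R (X \<union> B) + dd A R Y = dd A R (X \<union> Y) + dd A R B \<Longrightarrow> delta R (C1 \<inter> B) = dd A R Y"
proof -
  have BA: "B \<subseteq> A" using B by (simp add: closed_set_def)
  have s: "delta R (C1 \<union> B) + delta R (C1 \<inter> B) \<le> delta R C1 + delta R B"
    using delta_submod[OF C C1(2) BA] .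
  have a: "dd A R (X \<union> B) \<le> delta R (C1 \<union> B)" using dd_le[OF C, of "X \<union> B" "C1 \<union> B"] C1 BA by auto
  have b: "dd A R Y \<le> delta R (C1 \<inter> B)" using dd_le[OF C, of Y "C1 \<inter> B"] C1 BA Y by auto
  have c: "delta R B = dd A R B" using closed_delta[OF C B] .
  show "dd A R (X \<union> B) + dd A R Y \<le> dd A R (X \<union> Y) + dd A R B" using s a b c C1 by linarith
  show "dd A R (X \<union> B) + dd A R Y = dd A R (X \<union> Y) + dd A R B \<Longrightarrow> delta R (C1 \<inter> B) = dd A R Y"
    using s a b c C1 by linarith
qed

lemma L1':
  assumes C: "in_C A R" and B: "closed_set A R B" and Y: "Y \<subseteq> B" and X: "X \<subseteq> A"
  shows "dd A R (X \<union> B) + dd A R Y \<le> dd A R (X \<union> Y) + dd A R B"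
proof -
  have "X \<union> Y \<subseteq> A" using X Y B by (auto simp: closed_set_def)
  then obtain C1 where "X \<union> Y \<subseteq> C1" "C1 \<subseteq> A" "dd A R (X \<union> Y) = delta R C1" using dd_ex[OF C \<open>X \<union> Y \<subseteq> A\<close>] by blast
  thus ?thesis using L1(1)[OF C B Y X, of C1] by auto
qed

lemma good_meet:
  assumes C: "in_C A R" and B: "closed_set A R B" and X: "X \<subseteq> A"
    and B1: "closed_set A R B1" "B1 \<subseteq> B" "dd A R (X \<union> B1) - dd A R B1 = dd A R (X \<union> B) - dd A R B"
    and B2: "closed_set A R B2" "B2 \<subseteq> B" "dd A R (X \<union> B2) - dd A R B2 = dd A R (X \<union> B) - dd A R B"
  shows "dd A R (X \<union> (B1 \<inter> B2)) - dd A R (B1 \<inter> B2) = dd A R (X \<union> B) - dd A R B"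
proof -
  define k where "k = dd A R (X \<union> B) - dd A R B"
  have BA: "B \<subseteq> A" using B by (simp add: closed_set_def)
  have minim: "\<exists>Ci. X \<union> Bi \<subseteq> Ci \<and> Ci \<subseteq> A \<and> delta R Ci = dd A R (X \<union> Bi) \<and> Ci \<inter> B = Bi"
    if Bi: "closed_set A R Bi" "Bi \<subseteq> B" "dd A R (X \<union> Bi) - dd A R Bi = dd A R (X \<union> B) - dd A R B" for Bi
  proof -
    have XBA: "X \<union> Bi \<subseteq> A" using X Bi BA by auto
    obtain Ci where Ci: "X \<union> Bi \<subseteq> Ci" "Ci \<subseteq> A" "delta R Ci = dd A R (X \<union> Bi)"
      using dd_ex[OF C XBA] by metis
    have "delta R (Ci \<inter> B) = dd A R Bi" using L1(2)[OF C B Bi(2) X Ci] Bi(3) by linarith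
    hence "Ci \<inter> B \<subseteq> cl A R Bi" using cl_max[OF C, of Bi "Ci \<inter> B"] Ci Bi BA by auto
    hence "Ci \<inter> B = Bi" using Bi Ci by (auto simp: closed_set_def)
    thus ?thesis using Ci by blast
  qed
  obtain C1 where C1: "X \<union> B1 \<subseteq> C1" "C1 \<subseteq> A" "delta R C1 = dd A R (X \<union> B1)" "C1 \<inter> B = B1"
    using minim[OF B1] by blast
  obtain C2 where C2: "X \<union> B2 \<subseteq> C2" "C2 \<subseteq> A" "delta R C2 = dd A R (X \<union> B2)" "C2 \<inter> B = B2"
    using minim[OF B2] by blast
  have B1A: "B1 \<subseteq> A" and B2A: "B2 \<subseteq> A" using B1 B2 BA by auto
  have DB: "(C1 \<union> C2) \<inter> B = B1 \<union> B2" using C1 C2 by auto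
  have sD: "delta R ((C1 \<union> C2) \<union> B) + delta R ((C1 \<union> C2) \<inter> B) \<le> delta R (C1 \<union> C2) + delta R B"
    using delta_submod[OF C _ BA, of "C1 \<union> C2"] C1 C2 by auto
  have aD: "dd A R (X \<union> B) \<le> delta R ((C1 \<union> C2) \<union> B)"
    using dd_le[OF C, of "X \<union> B" "(C1 \<union> C2) \<union> B"] C1 C2 BA by auto
  have cB: "delta R B = dd A R B" using closed_delta[OF C B] .
  have e1: "delta R C1 + delta R C2 = delta R (C1 \<union> C2) + delta R (C1 \<inter> C2) + int (crs R C1 C2)"
    using delta_exact[OF C C1(2) C2(2)] .
  have e2: "delta R B1 + delta R B2 = delta R (B1 \<union> B2) + delta R (B1 \<inter> B2) + int (crs R B1 B2)"
    using delta_exact[OF C B1A B2A] .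
  have fR: "finite R" using inC_finR[OF C] .
  have sub: "Rsub R (B1 \<union> B2) - (Rsub R B1 \<union> Rsub R B2) \<subseteq> Rsub R (C1 \<union> C2) - (Rsub R C1 \<union> Rsub R C2)"
  proof
    fix r assume r: "r \<in> Rsub R (B1 \<union> B2) - (Rsub R B1 \<union> Rsub R B2)"
    hence rB: "r \<subseteq> B" using B1 B2 by (auto simp: Rsub_def)
    have "\<not> r \<subseteq> C1"
    proof
      assume "r \<subseteq> C1" hence "r \<subseteq> B1" using rB C1(4) by auto
      thus False using r by (auto simp: Rsub_def)
    qed
    moreover have "\<not> r \<subseteq> C2"
    proof
      assume "r \<subseteq> C2" hence "r \<subseteq> B2" using rB C2(4) by auto
      thus False using r by (auto simp: Rsub_def)
    qed
    ultimately show "r \<in> Rsub R (C1 \<union> C2) - (Rsub R C1 \<union> Rsub R C2)"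
      using r C1 C2 by (auto simp: Rsub_def)
  qed
  have cr: "crs R B1 B2 \<le> crs R C1 C2" unfolding crs_def
    by (rule card_mono[OF _ sub]) (use fR in \<open>auto simp: Rsub_def\<close>)
  have c1: "delta R B1 = dd A R B1" using closed_delta[OF C B1(1)] .
  have c2: "delta R B2 = dd A R B2" using closed_delta[OF C B2(1)] .
  have B3: "closed_set A R (B1 \<inter> B2)" using closed_Int[OF C B1(1) B2(1)] .
  have c3: "delta R (B1 \<inter> B2) = dd A R (B1 \<inter> B2)" using closed_delta[OF C B3] .
  have up: "dd A R (X \<union> (B1 \<inter> B2)) \<le> delta R (C1 \<inter> C2)"
    using dd_le[OF C, of "X \<union> (B1 \<inter> B2)" "C1 \<inter> C2"] C1 C2 by auto
  have lo: "dd A R (X \<union> B) + dd A R (B1 \<inter> B2) \<le> dd A R (X \<union> (B1 \<inter> B2)) + dd A R B"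
    using L1'[OF C B _ X, of "B1 \<inter> B2"] B1 by auto
  show ?thesis using sD[unfolded DB] aD cB e1 e2 cr c1 c2 c3 up lo B1(3) B2(3) C1(3) C2(3) by linarith
qed

lemma Inter_closed_fam:
  assumes "finite G" "G \<noteq> {}" "\<And>x y. x \<in> G \<Longrightarrow> y \<in> G \<Longrightarrow> x \<inter> y \<in> G"
  shows "\<Inter> G \<in> G"
proof -
  have "F \<subseteq> G \<Longrightarrow> \<Inter> F \<in> G" if "finite F" "F \<noteq> {}" for F
    using that
  proof (induction F rule: finite_ne_induct)
    case (singleton x) thus ?case by auto
  next
    case (insert x F) thus ?case using assms(3) by auto
  qed
  thus ?thesis using assms by auto
qed

theorem theorem6p1:
  fixes A :: "'a set" and R :: "'a set set" and B :: "'a set" and as :: "'a list"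
  assumes "in_C A R"
    and "closed_set A R B"
    and "set as \<subseteq> A"
  shows "\<exists>B0. closed_set A R B0 \<and> B0 \<subseteq> B \<and>
           (\<forall>B1. closed_set A R B1 \<and> B1 \<subseteq> B \<longrightarrow>
              (dd_rel A R as B1 = dd_rel A R as B \<longleftrightarrow> B0 \<subseteq> B1))"
proof -
  note C = assms(1) and Bc = assms(2) and X = assms(3)
  define G where "G = {B1. closed_set A R B1 \<and> B1 \<subseteq> B \<and> dd_rel A R as B1 = dd_rel A R as B}"
  have BA: "B \<subseteq> A" using Bc by (simp add: closed_set_def)
  have fG: "finite G"
  proof (rule finite_subset)
    show "G \<subseteq> Pow A" using BA by (auto simp: G_def)
    show "finite (Pow A)" using inC_finA[OF C] by simp
  qed
  have BG: "B \<in> G" using Bc by (simp add: G_def)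
  have meet: "x \<inter> y \<in> G" if "x \<in> G" "y \<in> G" for x y
  proof -
    have "closed_set A R (x \<inter> y)" using closed_Int[OF C] that by (auto simp: G_def)
    moreover have "dd_rel A R as (x \<inter> y) = dd_rel A R as B"
      using good_meet[OF C Bc X, of x y] that by (auto simp: G_def dd_rel_def)
    ultimately show ?thesis using that by (auto simp: G_def)
  qed
  define B0 where "B0 = \<Inter> G"
  have B0G: "B0 \<in> G" unfolding B0_def using Inter_closed_fam[OF fG _ meet] BG by blast
  show ?thesis
  proof (intro exI conjI allI impI)
    show "closed_set A R B0" "B0 \<subseteq> B" using B0G by (auto simp: G_def)
    fix B1 assume B1: "closed_set A R B1 \<and> B1 \<subseteq> B"
    show "dd_rel A R as B1 = dd_rel A R as B \<longleftrightarrow> B0 \<subseteq> B1"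
    proof
      assume "dd_rel A R as B1 = dd_rel A R as B"
      hence "B1 \<in> G" using B1 by (simp add: G_def)
      thus "B0 \<subseteq> B1" unfolding B0_def by blast
    next
      assume s: "B0 \<subseteq> B1"
      have a: "dd A R (set as \<union> B) + dd A R B1 \<le> dd A R (set as \<union> B1) + dd A R B"
        using L1'[OF C Bc _ X, of B1] B1 by auto
      have b: "dd A R (set as \<union> B1) + dd A R B0 \<le> dd A R (set as \<union> B0) + dd A R B1"
        using L1'[OF C _ s X] B1 by auto
      have c: "dd_rel A R as B0 = dd_rel A R as B" using B0G by (simp add: G_def)
      show "dd_rel A R as B1 = dd_rel A R as B" using a b c unfolding dd_rel_def by linarith
    qed
  qed
qed

end
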